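(* Let $\mathcal{H}$ be a complex Hilbert space with $\dim\mathcal{H}>1$. Then the Stone spectrum $\mathcal{Q}(\mathbb{L}(\mathcal{H}))$ is not compact, and if $\dim\mathcal{H}$ is infinite then $\mathcal{Q}(\mathbb{L}(\mathcal{H}))$ is not locally compact.
   Context: $\mathbb{L}(\mathcal{H})$ is the lattice of closed subspaces of $\mathcal{H}$ with $U\wedge V=U\cap V$, $U\vee V=\overline{U+V}$. A quasipoint in a lattice $\mathbb{L}$ with least element $0$ is a maximal (w.r.t. inclusion) subset $\mathfrak{B}\subseteq\mathbb{L}$ such that $\mathfrak{B}\neq\emptyset$, $0\notin\mathfrak{B}$, and for all $a,b\in\mathfrak{B}$ there is $c\in\mathfrak{B}$ with $c\le a\wedge b$. $\mathcal{Q}(\mathbb{L})$ denotes the set of quasipoints; for $a\in\mathbb{L}$ put $\mathcal{Q}_a(\mathbb{L})=\{\mathfrak{B}\in\mathcal{Q}(\mathbb{L}) : a\in\mathfrak{B}\}$. The Stone spectrum is $\mathcal{Q}(\mathbb{L})$ with the topology having the sets $\mathcal{Q}_a(\mathbb{L})$ as a basis. *)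

theory Defs
  imports "HOL-Analysis.Analysis"
begin

text \<open>HOL-Analysis only provides real inner product spaces. A complex inner
product space is modelled as a real inner product space equipped with a complex
scalar multiplication extending the real one and a complex (sesquilinear,
Hermitian) inner product whose real part is the real inner product.  The norm,
metric and topology are therefore those induced by the complex inner product.\<close>

class complex_inner = real_inner +
  fixes scaleC :: "complex \<Rightarrow> 'a \<Rightarrow> 'a" (infixr \<open>*\<^sub>C\<close> 75)
    and cinner :: "'a \<Rightarrow> 'a \<Rightarrow> complex"
  assumes scaleC_add_right: "a *\<^sub>C (x + y) = a *\<^sub>C x + a *\<^sub>C y"
    and scaleC_add_left: "(a + b) *\<^sub>C x = a *\<^sub>C x + b *\<^sub>C x"
    and scaleC_scaleC: "a *\<^sub>C (b *\<^sub>C x) = (a * b) *\<^sub>C x"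
    and scaleC_one: "1 *\<^sub>C x = x"
    and scaleC_of_real: "complex_of_real r *\<^sub>C x = r *\<^sub>R x"
    and cinner_commute: "cinner x y = cnj (cinner y x)"
    and cinner_add_right: "cinner x (y + z) = cinner x y + cinner x z"
    and cinner_scaleC_right: "cinner x (a *\<^sub>C y) = a * cinner x y"
    and inner_Re_cinner: "inner x y = Re (cinner x y)"

class chilbert_space = complex_inner + complete_space

definition csubspace :: "'a::complex_inner set \<Rightarrow> bool" where
  "csubspace S \<longleftrightarrow> 0 \<in> S \<and> (\<forall>x\<in>S. \<forall>y\<in>S. x + y \<in> S) \<and> (\<forall>c. \<forall>x\<in>S. c *\<^sub>C x \<in> S)"

definition cspan :: "'a::complex_inner set \<Rightarrow> 'a set" where
  "cspan S = {(\<Sum>v\<in>T. u v *\<^sub>C v) | T u. finite T \<and> T \<subseteq> S}"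

text \<open>Complex dimension: dim H <= 1 iff H is spanned by a single vector;
H is finite dimensional iff it is spanned by a finite set.\<close>
definition cdim_gt_one :: "'a::complex_inner itself \<Rightarrow> bool" where
  "cdim_gt_one _ \<longleftrightarrow> \<not> (\<exists>x::'a. cspan {x} = UNIV)"

definition cinfinite_dim :: "'a::complex_inner itself \<Rightarrow> bool" where
  "cinfinite_dim _ \<longleftrightarrow> \<not> (\<exists>F::'a set. finite F \<and> cspan F = UNIV)"

text \<open>L(H): closed complex subspaces, ordered by inclusion, meet = intersection,
least element the zero subspace.\<close>
definition closed_subspaces :: "'a::complex_inner set set" where
  "closed_subspaces = {S. csubspace S \<and> closed S}"

definition is_quasipoint_pre ::
  "'b set \<Rightarrow> ('b \<Rightarrow> 'b \<Rightarrow> bool) \<Rightarrow> ('b \<Rightarrow> 'b \<Rightarrow> 'b) \<Rightarrow> 'b \<Rightarrow> 'b set \<Rightarrow> bool" where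
  "is_quasipoint_pre L le meet zero B \<longleftrightarrow>
     B \<subseteq> L \<and> B \<noteq> {} \<and> zero \<notin> B \<and>
     (\<forall>a\<in>B. \<forall>b\<in>B. \<exists>c\<in>B. le c (meet a b))"

definition quasipoints ::
  "'b set \<Rightarrow> ('b \<Rightarrow> 'b \<Rightarrow> bool) \<Rightarrow> ('b \<Rightarrow> 'b \<Rightarrow> 'b) \<Rightarrow> 'b \<Rightarrow> 'b set set" where
  "quasipoints L le meet zero =
     {B. is_quasipoint_pre L le meet zero B \<and>
         (\<forall>B'. is_quasipoint_pre L le meet zero B' \<and> B \<subseteq> B' \<longrightarrow> B' = B)}"

definition stone_spectrum ::
  "'b set \<Rightarrow> ('b \<Rightarrow> 'b \<Rightarrow> bool) \<Rightarrow> ('b \<Rightarrow> 'b \<Rightarrow> 'b) \<Rightarrow> 'b \<Rightarrow> 'b set topology" where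
  "stone_spectrum L le meet zero =
     topology_generated_by
       ((\<lambda>a. {B \<in> quasipoints L le meet zero. a \<in> B}) ` L)"

definition stone_spectrum_LH :: "'a::complex_inner itself \<Rightarrow> 'a set set topology" where
  "stone_spectrum_LH _ =
     stone_spectrum (closed_subspaces :: 'a set set) (\<subseteq>) (\<inter>) {0}"

end

theory Submission
  imports Defs
begin

lemma scaleC_zero_left [simp]: "(0::complex) *\<^sub>C (x::'a::complex_inner) = 0"
  using scaleC_of_real[of 0 x] by simp

lemma scaleC_zero_right [simp]: "a *\<^sub>C (0::'a::complex_inner) = 0"
  using scaleC_add_right[of a "0::'a" 0] by simp

lemma scaleC_minus_one: "(-1) *\<^sub>C (x::'a::complex_inner) = - x"
  using scaleC_of_real[of "-1" x] by simp

lemma scaleC_diff_left: "(a - b) *\<^sub>C (x::'a::complex_inner) = a *\<^sub>C x - b *\<^sub>C x"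
  using scaleC_add_left[of "a - b" b x] by (simp add: algebra_simps)

lemma scaleC_diff_right: "a *\<^sub>C ((x::'a::complex_inner) - y) = a *\<^sub>C x - a *\<^sub>C y"
  using scaleC_add_right[of a "x - y" y] by (simp add: algebra_simps)

lemma cinner_zero_right [simp]: "cinner (x::'a::complex_inner) 0 = 0"
  using cinner_add_right[of x 0 0] by simp

lemma cinner_zero_left [simp]: "cinner 0 (x::'a::complex_inner) = 0"
  using cinner_commute[of 0 x] by simp

lemma cinner_add_left: "cinner ((x::'a::complex_inner) + y) z = cinner x z + cinner y z"
proof -
  have "cinner (x + y) z = cnj (cinner z (x + y))" by (rule cinner_commute)
  also have "\<dots> = cnj (cinner z x) + cnj (cinner z y)" by (simp add: cinner_add_right)
  also have "\<dots> = cinner x z + cinner y z" by (simp flip: cinner_commute)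
  finally show ?thesis .
qed

lemma cinner_scaleC_left: "cinner (a *\<^sub>C (x::'a::complex_inner)) y = cnj a * cinner x y"
proof -
  have "cinner (a *\<^sub>C x) y = cnj (cinner y (a *\<^sub>C x))" by (rule cinner_commute)
  also have "\<dots> = cnj a * cnj (cinner y x)" by (simp add: cinner_scaleC_right)
  also have "\<dots> = cnj a * cinner x y" by (simp flip: cinner_commute)
  finally show ?thesis .
qed

lemma cinner_diff_right: "cinner (x::'a::complex_inner) (y - z) = cinner x y - cinner x z"
  using cinner_add_right[of x "y - z" z] by (simp add: algebra_simps)

lemma cinner_sum_right: "cinner (x::'a::complex_inner) (\<Sum>i\<in>T. f i) = (\<Sum>i\<in>T. cinner x (f i))"
  by (induction T rule: infinite_finite_induct) (auto simp: cinner_add_right)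

lemma scaleC_sum_right: "a *\<^sub>C (\<Sum>i\<in>T. f i) = (\<Sum>i\<in>T. a *\<^sub>C (f i::'a::complex_inner))"
  by (induction T rule: infinite_finite_induct) (auto simp: scaleC_add_right)

lemma cinner_self_nz: "(z::'a::complex_inner) \<noteq> 0 \<Longrightarrow> cinner z z \<noteq> 0"
proof
  assume "z \<noteq> 0" "cinner z z = 0"
  then have "inner z z = 0" by (simp add: inner_Re_cinner)
  with \<open>z \<noteq> 0\<close> show False by simp
qed

lemma Im_cinner: "Im (cinner (z::'a::complex_inner) v) = inner (\<i> *\<^sub>C z) v"
proof -
  have "cinner (\<i> *\<^sub>C z) v = - \<i> * cinner z v" by (simp add: cinner_scaleC_left)
  then show ?thesis by (simp add: inner_Re_cinner)
qed

lemma cinner_decomp: "cinner (z::'a::complex_inner) v = complex_of_real (inner z v) + \<i> * complex_of_real (inner (\<i> *\<^sub>C z) v)"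
  by (subst complex_eq) (simp add: Im_cinner inner_Re_cinner)

lemma scaleC_decomp: "c *\<^sub>C (z::'a::complex_inner) = Re c *\<^sub>R z + Im c *\<^sub>R (\<i> *\<^sub>C z)"
proof -
  have "c *\<^sub>C z = (complex_of_real (Re c) + complex_of_real (Im c) * \<i>) *\<^sub>C z"
    by (subst complex_eq) (simp add: mult.commute)
  also have "\<dots> = Re c *\<^sub>R z + Im c *\<^sub>R (\<i> *\<^sub>C z)"
    by (simp add: scaleC_add_left scaleC_of_real flip: scaleC_scaleC)
  finally show ?thesis .
qed

lemma continuous_cinner: "continuous_on UNIV (\<lambda>v. cinner (z::'a::complex_inner) v)"
  unfolding cinner_decomp by (intro continuous_intros)

lemma continuous_scaleC:
  assumes "continuous_on S f"
  shows "continuous_on S (\<lambda>v. f v *\<^sub>C (z::'a::complex_inner))"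
proof -
  have eq: "(\<lambda>v. f v *\<^sub>C z) = (\<lambda>v. Re (f v) *\<^sub>R z + Im (f v) *\<^sub>R (\<i> *\<^sub>C z))"
    by (rule ext, rule scaleC_decomp)
  have "continuous_on S (\<lambda>v. Re (f v) *\<^sub>R z + Im (f v) *\<^sub>R (\<i> *\<^sub>C z))"
    using assms by (intro continuous_intros)
  then show ?thesis by (subst eq)
qed


lemma cspan_singleton: "cspan {z::'a::complex_inner} = range (\<lambda>c. c *\<^sub>C z)"
proof
  show "cspan {z} \<subseteq> range (\<lambda>c. c *\<^sub>C z)"
  proof
    fix v assume "v \<in> cspan {z}"
    then obtain T u where v: "v = (\<Sum>w\<in>T. u w *\<^sub>C w)" "T \<subseteq> {z}" unfolding cspan_def by blast
    then have "T = {} \<or> T = {z}" by blast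
    then show "v \<in> range (\<lambda>c. c *\<^sub>C z)"
    proof
      assume "T = {}" then have "v = 0 *\<^sub>C z" using v by simp
      then show ?thesis by blast
    next
      assume "T = {z}" then show ?thesis using v by simp
    qed
  qed
next
  show "range (\<lambda>c. c *\<^sub>C z) \<subseteq> cspan {z}"
  proof
    fix v assume "v \<in> range (\<lambda>c. c *\<^sub>C z)"
    then obtain c where "v = c *\<^sub>C z" by blast
    then show "v \<in> cspan {z}" unfolding cspan_def
      by (auto intro!: exI[of _ "{z}"] exI[of _ "\<lambda>_. c"])
  qed
qed

lemma closed_cspan_singleton: "closed (cspan {z::'a::complex_inner})"
proof (cases "z = 0")
  case True
  then have "cspan {z} = {0}" by (auto simp: cspan_singleton)
  then show ?thesis by simp
next
  case False
  define p where "p v = (cinner z v / cinner z z) *\<^sub>C z" for v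
  have nz: "cinner z z \<noteq> 0" using False by (rule cinner_self_nz)
  have "cspan {z} = {v. p v = v}"
  proof (intro set_eqI iffI)
    fix v assume "v \<in> cspan {z}"
    then obtain c where c: "v = c *\<^sub>C z" by (auto simp: cspan_singleton)
    then have "cinner z v = c * cinner z z" by (simp add: cinner_scaleC_right)
    then show "v \<in> {v. p v = v}" using nz c by (simp add: p_def)
  next
    fix v assume "v \<in> {v. p v = v}"
    then have "v = (cinner z v / cinner z z) *\<^sub>C z" by (simp add: p_def)
    then show "v \<in> cspan {z}" unfolding cspan_singleton by (metis rangeI)
  qed
  moreover have "continuous_on UNIV p"
    unfolding p_def using nz by (intro continuous_scaleC continuous_intros continuous_cinner) auto
  ultimately show ?thesis by (simp add: closed_Collect_eq continuous_on_id)
qed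

lemma csubspace_cspan_singleton: "csubspace (cspan {z::'a::complex_inner})"
proof -
  have "0 \<in> range (\<lambda>c. c *\<^sub>C z)" by (metis rangeI scaleC_zero_left)
  moreover have "x + y \<in> range (\<lambda>c. c *\<^sub>C z)" if hx: "x \<in> range (\<lambda>c. c *\<^sub>C z)" and hy: "y \<in> range (\<lambda>c. c *\<^sub>C z)" for x y
  proof -
    obtain a b where "x = a *\<^sub>C z" "y = b *\<^sub>C z" using hx hy by blast
    then have "x + y = (a + b) *\<^sub>C z" by (simp add: scaleC_add_left)
    then show ?thesis by blast
  qed
  moreover have "c *\<^sub>C x \<in> range (\<lambda>c. c *\<^sub>C z)" if hx: "x \<in> range (\<lambda>c. c *\<^sub>C z)" for c x
  proof -
    obtain a where "x = a *\<^sub>C z" using hx by blast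
    then have "c *\<^sub>C x = (c * a) *\<^sub>C z" by (simp add: scaleC_scaleC)
    then show ?thesis by blast
  qed
  ultimately show ?thesis unfolding csubspace_def cspan_singleton by blast
qed

lemma ray_in_L: "cspan {z::'a::complex_inner} \<in> closed_subspaces"
  by (simp add: closed_subspaces_def csubspace_cspan_singleton closed_cspan_singleton)

definition orth :: "'a::complex_inner set \<Rightarrow> 'a set" where
  "orth F = {v. \<forall>f\<in>F. cinner f v = 0}"

lemma orth_in_L: "orth F \<in> closed_subspaces"
proof -
  have "orth F = (\<Inter>f\<in>F. {v. cinner f v = 0})" by (auto simp: orth_def)
  moreover have "closed {v. cinner f v = 0}" for f :: 'a
    by (intro closed_Collect_eq continuous_cinner continuous_on_const)
  ultimately have "closed (orth F)" by auto
  moreover have "csubspace (orth F)"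
    by (auto simp: csubspace_def orth_def cinner_add_right cinner_scaleC_right)
  ultimately show ?thesis by (simp add: closed_subspaces_def)
qed

lemma L_Int: "a \<in> closed_subspaces \<Longrightarrow> b \<in> closed_subspaces \<Longrightarrow> a \<inter> b \<in> closed_subspaces"
  by (auto simp: closed_subspaces_def csubspace_def)

lemma UNIV_in_L: "UNIV \<in> closed_subspaces"
  by (auto simp: closed_subspaces_def csubspace_def)

lemma L_zero: "a \<in> closed_subspaces \<Longrightarrow> 0 \<in> a"
  by (auto simp: closed_subspaces_def csubspace_def)
lemma L_add: "a \<in> closed_subspaces \<Longrightarrow> x \<in> a \<Longrightarrow> y \<in> a \<Longrightarrow> x + y \<in> a"
  by (auto simp: closed_subspaces_def csubspace_def)
lemma L_scale: "a \<in> closed_subspaces \<Longrightarrow> x \<in> a \<Longrightarrow> c *\<^sub>C x \<in> a"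
  by (auto simp: closed_subspaces_def csubspace_def)
lemma L_scaleR: "a \<in> closed_subspaces \<Longrightarrow> x \<in> a \<Longrightarrow> c *\<^sub>R x \<in> a"
  by (metis L_scale scaleC_of_real)
lemma L_diff: "a \<in> closed_subspaces \<Longrightarrow> x \<in> a \<Longrightarrow> y \<in> a \<Longrightarrow> x - y \<in> a"
  by (metis L_add L_scaleR diff_conv_add_uminus scaleR_minus1_left)

lemma L_ray_sub: "a \<in> closed_subspaces \<Longrightarrow> x \<in> a \<Longrightarrow> cspan {x} \<subseteq> a"
  by (auto simp: cspan_singleton L_scale)


lemma cspan_finite:
  assumes "finite F"
  shows "cspan (F::'a::complex_inner set) = {\<Sum>v\<in>F. u v *\<^sub>C v | u. True}"
proof (intro set_eqI iffI)
  fix x assume "x \<in> cspan F"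
  then obtain T u where x: "x = (\<Sum>w\<in>T. u w *\<^sub>C w)" "T \<subseteq> F" unfolding cspan_def by blast
  define u' where "u' w = (if w \<in> T then u w else 0)" for w
  have "(\<Sum>w\<in>F. u' w *\<^sub>C w) = (\<Sum>w\<in>F. if w \<in> T then u w *\<^sub>C w else 0)"
    by (rule sum.cong) (auto simp: u'_def)
  also have "\<dots> = (\<Sum>w\<in>F \<inter> T. u w *\<^sub>C w)" using assms by (rule sum.inter_restrict[symmetric])
  also have "F \<inter> T = T" using x by blast
  finally have "x = (\<Sum>w\<in>F. u' w *\<^sub>C w)" using x by simp
  then show "x \<in> {\<Sum>v\<in>F. u v *\<^sub>C v | u. True}" by blast
next
  fix x assume "x \<in> {\<Sum>v\<in>F. u v *\<^sub>C v | u. True}"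
  then show "x \<in> cspan F" unfolding cspan_def using assms by blast
qed

lemma cspan_add:
  assumes "finite F" "x \<in> cspan F" "y \<in> cspan F"
  shows "x + y \<in> cspan (F::'a::complex_inner set)"
proof -
  obtain u1 u2 where "x = (\<Sum>v\<in>F. u1 v *\<^sub>C v)" "y = (\<Sum>v\<in>F. u2 v *\<^sub>C v)"
    using assms by (auto simp: cspan_finite)
  then have "x + y = (\<Sum>v\<in>F. (u1 v + u2 v) *\<^sub>C v)"
    by (simp add: scaleC_add_left sum.distrib)
  then show ?thesis using assms(1) by (auto simp: cspan_finite)
qed

lemma cspan_scale:
  assumes "finite F" "x \<in> cspan F"
  shows "c *\<^sub>C x \<in> cspan (F::'a::complex_inner set)"
proof -
  obtain u1 where "x = (\<Sum>v\<in>F. u1 v *\<^sub>C v)"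
    using assms by (auto simp: cspan_finite)
  then have "c *\<^sub>C x = (\<Sum>v\<in>F. (c * u1 v) *\<^sub>C v)"
    by (simp add: scaleC_sum_right scaleC_scaleC)
  then show ?thesis using assms(1) by (auto simp: cspan_finite)
qed

lemma cspan_diff:
  assumes "finite F" "x \<in> cspan F" "y \<in> cspan F"
  shows "x - y \<in> cspan (F::'a::complex_inner set)"
proof -
  have "(-1) *\<^sub>C y \<in> cspan F" using assms by (intro cspan_scale)
  then have "x + (-1) *\<^sub>C y \<in> cspan F" using assms by (intro cspan_add)
  then show ?thesis by (simp add: scaleC_minus_one)
qed

lemma cspan_superset: "f \<in> F \<Longrightarrow> f \<in> cspan (F::'a::complex_inner set)"
  unfolding cspan_def
  by (rule CollectI, rule exI[of _ "{f}"], rule exI[of _ "\<lambda>_. 1"]) (simp add: scaleC_one)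

lemma cspan_mono: "G \<subseteq> F \<Longrightarrow> cspan G \<subseteq> cspan (F::'a::complex_inner set)"
  unfolding cspan_def by blast

lemma cspan_orth:
  assumes "s \<in> cspan G" "w \<in> orth G"
  shows "cinner s (w::'a::complex_inner) = 0"
proof -
  obtain T u where s: "s = (\<Sum>v\<in>T. u v *\<^sub>C v)" "T \<subseteq> G" using assms(1) unfolding cspan_def by blast
  have "cinner w s = (\<Sum>v\<in>T. u v * cinner w v)" unfolding s by (simp add: cinner_sum_right cinner_scaleC_right)
  also have "\<dots> = 0"
  proof (rule sum.neutral, rule ballI)
    fix v assume "v \<in> T"
    then have "cinner v w = 0" using assms(2) s(2) by (auto simp: orth_def)
    then have "cinner w v = 0" by (metis cinner_commute complex_cnj_zero)
    then show "u v * cinner w v = 0" by simp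
  qed
  finally show ?thesis by (metis cinner_commute complex_cnj_zero)
qed

lemma projection:
  assumes "finite F"
  shows "\<exists>s\<in>cspan F. (v::'a::complex_inner) - s \<in> orth F"
  using assms
proof (induction F arbitrary: v rule: finite_induct)
  case empty
  have "0 \<in> cspan ({}::'a set)" unfolding cspan_def by force
  then show ?case by (auto simp: orth_def)
next
  case (insert f G)
  obtain sf where sf: "sf \<in> cspan G" "f - sf \<in> orth G" using insert.IH by blast
  obtain s where s: "s \<in> cspan G" "v - s \<in> orth G" using insert.IH by blast
  define gf where "gf = f - sf"
  define w where "w = v - s"
  define k where "k = (if gf = 0 then 0 else cinner gf w / cinner gf gf)"
  have fin: "finite (insert f G)" using insert by simp
  have sub: "cspan G \<subseteq> cspan (insert f G)" by (rule cspan_mono) blast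
  have "f \<in> cspan (insert f G)" by (rule cspan_superset) simp
  then have "gf \<in> cspan (insert f G)" unfolding gf_def using sf sub fin by (intro cspan_diff) auto
  then have s': "s + k *\<^sub>C gf \<in> cspan (insert f G)" using s sub fin by (intro cspan_add cspan_scale) auto
  have gfo: "gf \<in> orth G" "w \<in> orth G" using sf s by (auto simp: gf_def w_def)
  have w'G: "w - k *\<^sub>C gf \<in> orth G" using gfo
    by (auto simp: orth_def cinner_diff_right cinner_scaleC_right)
  have "cinner gf (w - k *\<^sub>C gf) = 0"
  proof (cases "gf = 0")
    case True then show ?thesis by simp
  next
    case False
    then have "cinner gf gf \<noteq> 0" by (rule cinner_self_nz)
    then show ?thesis using False by (simp add: k_def cinner_diff_right cinner_scaleC_right)
  qed
  moreover have "cinner sf (w - k *\<^sub>C gf) = 0" using sf(1) w'G by (rule cspan_orth)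
  moreover have "f = sf + gf" by (simp add: gf_def)
  ultimately have "cinner f (w - k *\<^sub>C gf) = 0" by (simp add: cinner_add_left)
  with w'G have "w - k *\<^sub>C gf \<in> orth (insert f G)" by (auto simp: orth_def)
  moreover have "v - (s + k *\<^sub>C gf) = w - k *\<^sub>C gf" by (simp add: w_def)
  ultimately show ?case using s' by metis
qed

lemma orth_nonzero:
  assumes "cinfinite_dim TYPE('a::complex_inner)" "finite (F::'a set)"
  shows "orth F \<noteq> {0}"
proof
  assume h: "orth F = {0}"
  have "v \<in> cspan F" for v :: 'a
  proof -
    obtain s where "s \<in> cspan F" "v - s \<in> orth F" using projection[OF assms(2)] by blast
    then show ?thesis using h by simp
  qed
  then have "cspan F = UNIV" by blast
  then show False using assms unfolding cinfinite_dim_def by blast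
qed


lemma self_in_ray: "x \<in> cspan {x::'a::complex_inner}"
  by (rule cspan_superset) simp

definition QPs :: "'a::complex_inner set set set" where
  "QPs = quasipoints closed_subspaces (\<subseteq>) (\<inter>) {0}"

definition preQ :: "'a::complex_inner set set \<Rightarrow> bool" where
  "preQ B = is_quasipoint_pre closed_subspaces (\<subseteq>) (\<inter>) {0} B"

definition Qa :: "'a::complex_inner set \<Rightarrow> 'a set set set" where
  "Qa a = {B \<in> QPs. a \<in> B}"

lemma preQ_iff: "preQ B \<longleftrightarrow> B \<subseteq> closed_subspaces \<and> B \<noteq> {} \<and> {0} \<notin> B \<and>
    (\<forall>a\<in>B. \<forall>b\<in>B. \<exists>c\<in>B. c \<subseteq> a \<inter> b)"
  by (simp add: preQ_def is_quasipoint_pre_def)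

lemma preQ_L: "preQ B \<Longrightarrow> c \<in> B \<Longrightarrow> c \<in> closed_subspaces"
  by (auto simp: preQ_iff)
lemma preQ_nz: "preQ B \<Longrightarrow> c \<in> B \<Longrightarrow> c \<noteq> {0}"
  by (auto simp: preQ_iff)
lemma preQ_dir: "preQ B \<Longrightarrow> a \<in> B \<Longrightarrow> b \<in> B \<Longrightarrow> \<exists>c\<in>B. c \<subseteq> a \<inter> b"
  by (simp add: preQ_iff)
lemma preQ_intro:
  assumes "B \<subseteq> closed_subspaces" "B \<noteq> {}" "{0} \<notin> B" "\<And>a b. a \<in> B \<Longrightarrow> b \<in> B \<Longrightarrow> \<exists>c\<in>B. c \<subseteq> a \<inter> b"
  shows "preQ B"
  using assms by (simp add: preQ_iff)

lemma QPs_iff: "B \<in> QPs \<longleftrightarrow> preQ B \<and> (\<forall>B'. preQ B' \<and> B \<subseteq> B' \<longrightarrow> B' = B)"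
  by (simp add: QPs_def quasipoints_def preQ_def)

lemma qp_pre: "B \<in> QPs \<Longrightarrow> preQ B"
  by (simp add: QPs_iff)

lemma qp_max: "B \<in> QPs \<Longrightarrow> preQ B' \<Longrightarrow> B \<subseteq> B' \<Longrightarrow> B' = B"
  by (simp add: QPs_iff)

lemma nonzero_elem: "c \<in> closed_subspaces \<Longrightarrow> c \<noteq> {0} \<Longrightarrow> \<exists>v\<in>c. v \<noteq> (0::'a::complex_inner)"
  using L_zero by blast

lemma qp_up:
  assumes B: "B \<in> QPs" and c: "c \<in> B" and d: "d \<in> closed_subspaces" and cd: "c \<subseteq> d"
  shows "d \<in> B"
proof -
  have pB: "preQ B" using B by (rule qp_pre)
  have cL: "c \<in> closed_subspaces" "c \<noteq> {0}" using preQ_L[OF pB c] preQ_nz[OF pB c] by simp_all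
  then obtain v where v: "v \<in> c" "v \<noteq> 0" using nonzero_elem by blast
  have dnz: "d \<noteq> {0}"
  proof
    assume "d = {0}"
    then have "v = 0" using v(1) cd by auto
    then show False using v(2) by simp
  qed
  have low: "\<exists>e\<in>B. e \<subseteq> p" if "p \<in> insert d B" for p
  proof (cases "p = d")
    case True then show ?thesis using c cd by blast
  next
    case False then have "p \<in> B" using that by simp
    then show ?thesis by blast
  qed
  have "preQ (insert d B)"
  proof (rule preQ_intro)
    show "insert d B \<subseteq> closed_subspaces" using preQ_L[OF pB] d by blast
    show "insert d B \<noteq> {}" by simp
    show "{0} \<notin> insert d B" using preQ_nz[OF pB] dnz by auto
  next
    fix p q assume p: "p \<in> insert d B" and q: "q \<in> insert d B"
    obtain e1 where e1: "e1 \<in> B" "e1 \<subseteq> p" using low[OF p] by blast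
    obtain e2 where e2: "e2 \<in> B" "e2 \<subseteq> q" using low[OF q] by blast
    from preQ_dir[OF pB e1(1) e2(1)] obtain e where e: "e \<in> B" "e \<subseteq> e1 \<inter> e2" ..
    have "e \<subseteq> p \<inter> q" using e(2) Int_mono[OF e1(2) e2(2)] by (rule subset_trans)
    moreover have "e \<in> insert d B" using e(1) by simp
    ultimately show "\<exists>e\<in>insert d B. e \<subseteq> p \<inter> q" by (rule bexI)
  qed
  then have "insert d B = B" using qp_max[OF B] by blast
  then show ?thesis by blast
qed

lemma qp_int:
  assumes B: "B \<in> QPs" and "a \<in> B" "b \<in> B"
  shows "a \<inter> b \<in> B"
proof -
  have pB: "preQ B" using B by (rule qp_pre)
  from preQ_dir[OF pB assms(2,3)] obtain c where "c \<in> B" "c \<subseteq> a \<inter> b" ..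
  moreover have "a \<inter> b \<in> closed_subspaces" using preQ_L[OF pB] assms by (intro L_Int) auto
  ultimately show ?thesis using qp_up[OF B] by blast
qed

lemma qp_UNIV: "B \<in> QPs \<Longrightarrow> UNIV \<in> B"
proof -
  assume B: "B \<in> QPs"
  then have "B \<noteq> {}" using qp_pre[OF B] by (simp add: preQ_iff)
  then obtain c where "c \<in> B" by blast
  then show ?thesis using qp_up[OF B _ UNIV_in_L] by blast
qed

lemma qp_xy:
  assumes B: "B \<in> QPs" and x: "x \<noteq> 0" and y: "y \<notin> cspan {x::'a::complex_inner}"
  shows "\<exists>b\<in>B. \<not> (x \<in> b \<and> y \<in> b)"
proof (rule ccontr)
  assume "\<not> ?thesis"
  then have all: "\<forall>b\<in>B. x \<in> b \<and> y \<in> b" by blast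
  have pB: "preQ B" using B by (rule qp_pre)
  let ?r = "cspan {x}"
  have rnz: "?r \<noteq> {0}" using x self_in_ray[of x] by blast
  have "preQ (insert ?r B)"
  proof (rule preQ_intro)
    show "insert ?r B \<subseteq> closed_subspaces" using preQ_L[OF pB] ray_in_L by blast
    show "insert ?r B \<noteq> {}" by simp
    show "{0} \<notin> insert ?r B" using preQ_nz[OF pB] rnz by auto
  next
    fix p q assume p: "p \<in> insert ?r B" and q: "q \<in> insert ?r B"
    have "?r \<subseteq> b" if "b \<in> B" for b
      using that all preQ_L[OF pB that] L_ray_sub by blast
    then have "?r \<subseteq> p \<inter> q" using p q by auto
    then show "\<exists>e\<in>insert ?r B. e \<subseteq> p \<inter> q" by blast
  qed
  then have "insert ?r B = B" using qp_max[OF B] by blast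
  then have "?r \<in> B" by blast
  then show False using all y by blast
qed

lemma ray_atom:
  assumes x: "x \<noteq> (0::'a::complex_inner)" and d: "d \<in> closed_subspaces" "d \<subseteq> cspan {x}" "d \<noteq> {0}"
  shows "cspan {x} \<subseteq> d"
proof -
  obtain v where v: "v \<in> d" "v \<noteq> 0" using nonzero_elem d by blast
  then obtain c where c: "v = c *\<^sub>C x" using d by (auto simp: cspan_singleton)
  then have "c \<noteq> 0" using v by auto
  then have "x = (inverse c) *\<^sub>C v" using c by (simp add: scaleC_scaleC scaleC_one)
  then have "x \<in> d" using v d L_scale by metis
  then show ?thesis using d L_ray_sub by blast
qed

lemma pf_qp:
  assumes x: "x \<noteq> (0::'a::complex_inner)"
  shows "{c \<in> closed_subspaces. cspan {x} \<subseteq> c} \<in> QPs"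
  unfolding QPs_iff
proof (intro conjI allI impI)
  let ?r = "cspan {x}"
  let ?P = "{c \<in> closed_subspaces. cspan {x} \<subseteq> c}"
  have rnz: "?r \<noteq> {0}" using x self_in_ray[of x] by blast
  show "preQ ?P"
  proof (rule preQ_intro)
    show "?P \<subseteq> closed_subspaces" by blast
    show "?P \<noteq> {}" using ray_in_L by blast
    show "{0} \<notin> ?P" using x self_in_ray[of x] by blast
  next
    fix p q assume "p \<in> ?P" "q \<in> ?P"
    then show "\<exists>e\<in>?P. e \<subseteq> p \<inter> q" using ray_in_L by blast
  qed
next
  let ?r = "cspan {x}"
  let ?P = "{c \<in> closed_subspaces. cspan {x} \<subseteq> c}"
  fix B' assume h: "preQ B' \<and> ?P \<subseteq> B'"
  have rB: "?r \<in> B'" using h ray_in_L by blast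
  have "c \<in> ?P" if c: "c \<in> B'" for c
  proof -
    have pB': "preQ B'" using h by simp
    from preQ_dir[OF pB' c rB] obtain e where e: "e \<in> B'" "e \<subseteq> c \<inter> ?r" ..
    have "e \<in> closed_subspaces" "e \<noteq> {0}" using preQ_L[OF pB' e(1)] preQ_nz[OF pB' e(1)] by simp_all
    then have "?r \<subseteq> e" using ray_atom[OF x] e by blast
    moreover have "c \<in> closed_subspaces" using preQ_L[OF pB' c] .
    ultimately show ?thesis using e by blast
  qed
  then show "B' = ?P" using h by blast
qed


lemma X_eq: "stone_spectrum_LH TYPE('a::complex_inner) = topology_generated_by (Qa ` (closed_subspaces :: 'a set set))"
  by (simp add: stone_spectrum_LH_def stone_spectrum_def Qa_def QPs_def)

lemma topspace_X: "topspace (stone_spectrum_LH TYPE('a::complex_inner)) = (QPs :: 'a set set set)"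
proof -
  have "\<Union>(Qa ` (closed_subspaces :: 'a set set)) = QPs"
  proof (intro equalityI subsetI)
    fix B assume "B \<in> \<Union>(Qa ` (closed_subspaces :: 'a set set))"
    then show "B \<in> QPs" by (auto simp: Qa_def)
  next
    fix B :: "'a set set" assume B: "B \<in> QPs"
    then have "B \<in> Qa UNIV" using qp_UNIV[OF B] by (simp add: Qa_def)
    then show "B \<in> \<Union>(Qa ` (closed_subspaces :: 'a set set))" using UNIV_in_L by blast
  qed
  then show ?thesis by (simp add: X_eq)
qed

lemma open_Qa: "a \<in> closed_subspaces \<Longrightarrow> openin (stone_spectrum_LH TYPE('a::complex_inner)) (Qa (a::'a set))"
  unfolding X_eq by (rule topology_generated_by_Basis) simp

lemma Qa_QPs: "Qa a = {B \<in> QPs. a \<in> B}"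
  by (simp add: Qa_def)

lemma nbhd_gen:
  assumes "generate_topology_on (Qa ` (closed_subspaces :: 'a::complex_inner set set)) U" "B \<in> U"
  shows "\<exists>a\<in>closed_subspaces. B \<in> Qa a \<and> Qa a \<subseteq> U"
  using assms
proof (induction arbitrary: B rule: generate_topology_on.induct)
  case Empty then show ?case by simp
next
  case (Int U1 U2)
  obtain a1 where a1: "a1 \<in> closed_subspaces" "B \<in> Qa a1" "Qa a1 \<subseteq> U1" using Int by blast
  obtain a2 where a2: "a2 \<in> closed_subspaces" "B \<in> Qa a2" "Qa a2 \<subseteq> U2" using Int by blast
  have BQ: "B \<in> QPs" "a1 \<in> B" "a2 \<in> B" using a1 a2 by (auto simp: Qa_def)
  have L12: "a1 \<inter> a2 \<in> closed_subspaces" using a1 a2 by (intro L_Int) auto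
  have "B \<in> Qa (a1 \<inter> a2)" using qp_int[OF BQ] BQ by (simp add: Qa_def)
  moreover have "Qa (a1 \<inter> a2) \<subseteq> Qa a1" "Qa (a1 \<inter> a2) \<subseteq> Qa a2"
    using qp_up a1(1) a2(1) by (auto simp: Qa_def)
  ultimately show ?case using L12 a1 a2 by blast
next
  case (UN K)
  then obtain k where "k \<in> K" "B \<in> k" by blast
  then obtain a where "a \<in> closed_subspaces" "B \<in> Qa a" "Qa a \<subseteq> k" using UN by blast
  then show ?case using \<open>k \<in> K\<close> by blast
next
  case (Basis s)
  then show ?case by blast
qed

lemma nbhd:
  assumes "openin (stone_spectrum_LH TYPE('a::complex_inner)) U" "B \<in> U"
  shows "\<exists>a\<in>closed_subspaces. B \<in> Qa (a::'a set) \<and> Qa a \<subseteq> U"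
  using assms unfolding X_eq openin_topology_generated_by_iff by (rule nbhd_gen)


lemma key:
  fixes x y :: "'a::complex_inner"
  assumes aL: "a \<in> closed_subspaces" and xa: "x \<in> a" and ya: "y \<in> a" and x0: "x \<noteq> 0"
    and y: "y \<notin> cspan {x}"
    and K: "compactin (stone_spectrum_LH TYPE('a)) K" and sub: "Qa a \<subseteq> K"
  shows False
proof -
  define z where "z n = x + real n *\<^sub>R y" for n :: nat
  define P where "P n = {c \<in> closed_subspaces. cspan {z n} \<subseteq> c}" for n
  have z0: "z n \<noteq> 0" for n
  proof
    assume zn: "z n = 0"
    show False
    proof (cases "n = 0")
      case True then show False using zn x0 by (simp add: z_def)
    next
      case False
      have ny: "real n *\<^sub>R y = - x" using zn unfolding z_def by (simp add: eq_neg_iff_add_eq_0 add.commute)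
      have "y = inverse (real n) *\<^sub>R (real n *\<^sub>R y)" using False by simp
      also have "\<dots> = complex_of_real (- inverse (real n)) *\<^sub>C x" unfolding ny scaleC_of_real by simp
      finally have "y \<in> cspan {x}" unfolding cspan_singleton by (rule image_eqI) simp
      then show False using y by simp
    qed
  qed
  have Pq: "P n \<in> QPs" for n using pf_qp[OF z0[of n]] by (simp add: P_def)
  have zna: "z n \<in> a" for n using L_add[OF aL xa L_scaleR[OF aL ya]] by (simp add: z_def)
  have PQa: "P n \<in> Qa a" for n
    using Pq[of n] L_ray_sub[OF aL zna[of n]] aL by (simp add: Qa_def P_def)
  define U where "U = {Qa b | b. b \<in> closed_subspaces \<and> \<not> (x \<in> b \<and> y \<in> b)}"
  have opn: "\<forall>S\<in>U. openin (stone_spectrum_LH TYPE('a)) S" using open_Qa by (auto simp: U_def)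
  have "K \<subseteq> \<Union>U"
  proof
    fix B assume "B \<in> K"
    then have B: "B \<in> QPs" using K compactin_subset_topspace topspace_X by blast
    obtain b where b: "b \<in> B" "\<not> (x \<in> b \<and> y \<in> b)" using qp_xy[OF B x0 y] by blast
    have "b \<in> closed_subspaces" using preQ_L[OF qp_pre[OF B] b(1)] .
    then have "Qa b \<in> U" using b(2) by (auto simp: U_def)
    moreover have "B \<in> Qa b" using B b by (simp add: Qa_def)
    ultimately show "B \<in> \<Union>U" by blast
  qed
  then obtain F where F: "finite F" "F \<subseteq> U" "K \<subseteq> \<Union>F" using K opn unfolding compactin_def by meson
  have one: "n = m" if S: "S \<in> U" "P n \<in> S" "P m \<in> S" for S n m
  proof (rule ccontr)
    assume nm: "n \<noteq> m"
    obtain b where b: "S = Qa b" "b \<in> closed_subspaces" "\<not> (x \<in> b \<and> y \<in> b)" using S(1) by (auto simp: U_def)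
    have "b \<in> P n" "b \<in> P m" using S b by (auto simp: Qa_def)
    then have zb: "z n \<in> b" "z m \<in> b" using self_in_ray by (auto simp: P_def)
    have "z n - z m = (real n - real m) *\<^sub>R y" by (simp add: z_def algebra_simps)
    then have d: "(real n - real m) *\<^sub>R y \<in> b" using L_diff[OF b(2) zb] by simp
    have "y = inverse (real n - real m) *\<^sub>R ((real n - real m) *\<^sub>R y)" using nm by simp
    then have yb: "y \<in> b" using L_scaleR[OF b(2) d] by metis
    have "x = z n - real n *\<^sub>R y" by (simp add: z_def)
    then have "x \<in> b" using L_diff[OF b(2) zb(1) L_scaleR[OF b(2) yb]] by metis
    then show False using yb b(3) by blast
  qed
  define N where "N S = {n. P n \<in> S}" for S
  have finN: "finite (N S)" if "S \<in> F" for S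
  proof (cases "N S = {}")
    case True then show ?thesis by simp
  next
    case False
    then obtain n where n: "n \<in> N S" by blast
    have "N S \<subseteq> {n}" using one[of S n] n that F(2) by (auto simp: N_def)
    then show ?thesis by (rule finite_subset) simp
  qed
  have "finite (\<Union>S\<in>F. N S)" using F(1) finN by blast
  then obtain n where n: "n \<notin> (\<Union>S\<in>F. N S)" using ex_new_if_finite[OF infinite_UNIV_nat] by blast
  have "P n \<in> \<Union>F" using PQa[of n] sub F(3) by blast
  then obtain S where "S \<in> F" "P n \<in> S" by blast
  then show False using n by (auto simp: N_def)
qed


lemma B0_pre:
  assumes inf: "cinfinite_dim TYPE('a::complex_inner)"
  shows "preQ {orth F | F. finite (F::'a set)}"
proof (rule preQ_intro)
  show "{orth F | F. finite (F::'a set)} \<subseteq> closed_subspaces" using orth_in_L by blast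
  show "{orth F | F. finite (F::'a set)} \<noteq> {}" by blast
  show "{0} \<notin> {orth F | F. finite (F::'a set)}" using orth_nonzero[OF inf] by fastforce
next
  fix p q assume "p \<in> {orth F | F. finite (F::'a set)}" "q \<in> {orth F | F. finite (F::'a set)}"
  then obtain F G where FG: "p = orth F" "q = orth G" "finite F" "finite G" by blast
  have "orth (F \<union> G) = p \<inter> q" using FG by (auto simp: orth_def)
  moreover have "finite (F \<union> G)" using FG by simp
  ultimately show "\<exists>c\<in>{orth F | F. finite (F::'a set)}. c \<subseteq> p \<inter> q" by blast
qed

lemma exists_qp_above:
  assumes p0: "preQ (B0::'a::complex_inner set set)"
  shows "\<exists>M\<in>QPs. B0 \<subseteq> M"
proof -
  define A where "A = {B. preQ B \<and> B0 \<subseteq> B}"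
  have "\<forall>C\<in>chains A. \<exists>U\<in>A. \<forall>X\<in>C. X \<subseteq> U"
  proof
    fix C assume C: "C \<in> chains A"
    show "\<exists>U\<in>A. \<forall>X\<in>C. X \<subseteq> U"
    proof (cases "C = {}")
      case True
      then show ?thesis using p0 by (auto simp: A_def)
    next
      case False
      have CA: "C \<subseteq> A" and ch: "\<And>X Y. X \<in> C \<Longrightarrow> Y \<in> C \<Longrightarrow> X \<subseteq> Y \<or> Y \<subseteq> X"
        using C by (auto simp: chains_def chain_subset_def)
      have pre: "preQ X" if "X \<in> C" for X using that CA by (auto simp: A_def)
      have "preQ (\<Union>C)"
      proof (rule preQ_intro)
        show "\<Union>C \<subseteq> closed_subspaces" using preQ_L pre by blast
        obtain X where "X \<in> C" using False by blast
        then have "B0 \<subseteq> X" using CA by (auto simp: A_def)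
        moreover have "B0 \<noteq> {}" using p0 by (simp add: preQ_iff)
        ultimately show "\<Union>C \<noteq> {}" using \<open>X \<in> C\<close> by blast
        show "{0} \<notin> \<Union>C" using preQ_nz pre by blast
      next
        fix p q assume "p \<in> \<Union>C" "q \<in> \<Union>C"
        then obtain X Y where XY: "X \<in> C" "Y \<in> C" "p \<in> X" "q \<in> Y" by blast
        show "\<exists>c\<in>\<Union>C. c \<subseteq> p \<inter> q"
        proof (cases "X \<subseteq> Y")
          case True
          from preQ_dir[OF pre[OF XY(2)]] True XY obtain c where "c \<in> Y" "c \<subseteq> p \<inter> q" by blast
          then show ?thesis using XY(2) by blast
        next
          case False
          then have "Y \<subseteq> X" using ch[OF XY(1,2)] by blast
          from preQ_dir[OF pre[OF XY(1)]] this XY obtain c where "c \<in> X" "c \<subseteq> p \<inter> q" by blast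
          then show ?thesis using XY(1) by blast
        qed
      qed
      moreover have "B0 \<subseteq> \<Union>C" using False CA by (auto simp: A_def)
      ultimately show ?thesis by (auto simp: A_def)
    qed
  qed
  then obtain M where M: "M \<in> A" "\<forall>X\<in>A. M \<subseteq> X \<longrightarrow> X = M" using Zorn_Lemma2 by blast
  have "M \<in> QPs" unfolding QPs_iff
  proof (intro conjI allI impI)
    show "preQ M" using M by (simp add: A_def)
    fix B' assume "preQ B' \<and> M \<subseteq> B'"
    then have "B' \<in> A" using M(1) by (auto simp: A_def)
    then show "B' = M" using M(2) \<open>preQ B' \<and> M \<subseteq> B'\<close> by blast
  qed
  then show ?thesis using M(1) by (auto simp: A_def)
qed

theorem proposition3p51:
  assumes "cdim_gt_one TYPE('a::chilbert_space)"
  shows "\<not> compact_space (stone_spectrum_LH TYPE('a)) \<and>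
         (cinfinite_dim TYPE('a) \<longrightarrow> \<not> locally_compact_space (stone_spectrum_LH TYPE('a)))"
proof
  obtain x :: 'a where x: "x \<notin> cspan {0}" using assms unfolding cdim_gt_one_def by blast
  then have x0: "x \<noteq> 0" using self_in_ray[of "0::'a"] by blast
  obtain y :: 'a where y: "y \<notin> cspan {x}" using assms unfolding cdim_gt_one_def by blast
  show "\<not> compact_space (stone_spectrum_LH TYPE('a))"
  proof
    assume "compact_space (stone_spectrum_LH TYPE('a))"
    then have K: "compactin (stone_spectrum_LH TYPE('a)) (topspace (stone_spectrum_LH TYPE('a)))"
      by (simp add: compact_space_def)
    have "Qa UNIV \<subseteq> topspace (stone_spectrum_LH TYPE('a))" by (auto simp: topspace_X Qa_def)
    then show False using key[OF UNIV_in_L _ _ x0 y K] by blast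
  qed
  show "cinfinite_dim TYPE('a) \<longrightarrow> \<not> locally_compact_space (stone_spectrum_LH TYPE('a))"
  proof (intro impI notI)
    assume inf: "cinfinite_dim TYPE('a)" and lc: "locally_compact_space (stone_spectrum_LH TYPE('a))"
    obtain M :: "'a set set" where M: "M \<in> QPs" "{orth F | F. finite (F::'a set)} \<subseteq> M"
      using exists_qp_above[OF B0_pre[OF inf]] by blast
    have pM: "preQ M" using M(1) by (rule qp_pre)
    obtain U K where UK: "openin (stone_spectrum_LH TYPE('a)) U" "compactin (stone_spectrum_LH TYPE('a)) K"
      "M \<in> U" "U \<subseteq> K"
      using lc M(1) unfolding locally_compact_space_def topspace_X by blast
    obtain a :: "'a set" where a: "a \<in> closed_subspaces" "M \<in> Qa a" "Qa a \<subseteq> U" using nbhd[OF UK(1,3)] by blast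
    have aM: "a \<in> M" using a(2) by (simp add: Qa_def)
    obtain v where v: "v \<in> a" "v \<noteq> 0" using nonzero_elem[OF a(1) preQ_nz[OF pM aM]] by blast
    show False
    proof (cases "\<exists>w\<in>a. w \<notin> cspan {v}")
      case True
      then obtain w where "w \<in> a" "w \<notin> cspan {v}" by blast
      then show False using key[OF a(1) v(1) _ v(2) _ UK(2)] a(3) UK(4) by blast
    next
      case False
      then have asub: "a \<subseteq> cspan {v}" by blast
      have "orth {v} \<in> M" using M(2) by blast
      then have oa: "orth {v} \<inter> a \<in> M" using qp_int[OF M(1) _ aM] by blast
      have "orth {v} \<inter> a \<in> closed_subspaces" using preQ_L[OF pM oa] .
      moreover have "orth {v} \<inter> a \<noteq> {0}" using preQ_nz[OF pM oa] .
      moreover have "orth {v} \<inter> a \<subseteq> cspan {v}" using asub by blast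
      ultimately have "cspan {v} \<subseteq> orth {v} \<inter> a" using ray_atom[OF v(2)] by blast
      then have "v \<in> orth {v}" using self_in_ray[of v] by blast
      then have "cinner v v = 0" by (simp add: orth_def)
      then show False using cinner_self_nz[OF v(2)] by simp
    qed
  qed
qed

end
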